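(* Let $P\subseteq\mathbb{R}^n$ be a closed convex set, $c:\mathbb{R}^n\to\mathbb{R}$, $A\in\mathbb{R}^{I\times n}$ with rows $A_{i\bullet}$, $\eta\in\mathbb{R}^I$, scalars $\psi_{ij}$ ($i=0,\dots,I$, $j=1,\dots,J_i$) with $\psi_{ij}^\pm=\max(\pm\psi_{ij},0)$, and continuous functions $\phi_{ij},\varphi_{ij}:\mathbb{R}^n\to\mathbb{R}$. Let $\bar x\in P$. Then there exists $\bar\varepsilon>0$ (depending on $\bar x$) such that for every $\varepsilon\in(0,\bar\varepsilon]$: (A) if $\bar x$ is a local maximizer of the M-HSCOP (maximize $\theta_{\rm MHS}$ over $X_{\rm MHS}$), then $\bar x$ is a local maximizer of $(\mathrm{P}^\varepsilon_{\rm MHS})$ (maximize $\theta^\varepsilon_{\rm MHS}$ over $X^\varepsilon_{\rm MHS}$); (B) if $\bar x$ satisfies the local sign-invariance condition below and $\bar x$ is a local maximizer of $(\mathrm{P}^\varepsilon_{\rm MHS})$, then $\bar x$ is a local maximizer of the M-HSCOP. Local sign-invariance condition: for all $i=0,1,\dots,I$, $\varphi_{ij}$ is nonpositive on a neighborhood of $\bar x$ for every $j\in\mathcal{J}^+_{i,0}(\bar x)$, and $\phi_{ij}$ is nonnegative on a neighborhood of $\bar x$ for every $j\in\mathcal{J}^-_{i,0}(\bar x)$.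
   Context: $\mathbf{1}_S$ is the indicator of $S\subseteq\mathbb{R}$. The M-HSCOP has objective $\theta_{\rm MHS}(x)=c(x)+\sum_{j=1}^{J_0}\psi_{0j}\mathbf{1}_{[0,\infty)}(\phi_{0j}(x))\mathbf{1}_{(0,\infty)}(\varphi_{0j}(x))$ and feasible set $X_{\rm MHS}=\{x\in P: A_{i\bullet}x+\sum_{j=1}^{J_i}\psi_{ij}\mathbf{1}_{[0,\infty)}(\phi_{ij}(x))\mathbf{1}_{(0,\infty)}(\varphi_{ij}(x))\ge\eta_i,\ i=1,\dots,I\}$. For $\varepsilon>0$, $(\mathrm{P}^\varepsilon_{\rm MHS})$ has objective $\theta^\varepsilon_{\rm MHS}(x)=c(x)+\sum_{j=1}^{J_0}\psi_{0j}^+\mathbf{1}_{[0,\infty)}(\phi_{0j}(x))\mathbf{1}_{[\varepsilon,\infty)}(\varphi_{0j}(x))-\sum_{j=1}^{J_0}\psi_{0j}^-\mathbf{1}_{(-\varepsilon,\infty)}(\phi_{0j}(x))\mathbf{1}_{(0,\infty)}(\varphi_{0j}(x))$ and feasible set $X^\varepsilon_{\rm MHS}=\{x\in P: A_{i\bullet}x+\sum_{j}\psi_{ij}^+\mathbf{1}_{[0,\infty)}(\phi_{ij}(x))\mathbf{1}_{[\varepsilon,\infty)}(\varphi_{ij}(x))-\sum_j\psi_{ij}^-\mathbf{1}_{(-\varepsilon,\infty)}(\phi_{ij}(x))\mathbf{1}_{(0,\infty)}(\varphi_{ij}(x))\ge\eta_i,\ i=1,\dots,I\}$. A local maximizer of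 $f$ on $X$ is $\bar x\in X$ with a neighborhood $\mathcal{N}$ such that $f(\bar x)\ge f(x)$ for all $x\in X\cap\mathcal{N}$. Index sets: $\mathcal{J}^+_{i,0}(\bar x)=\{j\in\{1,\dots,J_i\}:\psi_{ij}>0,\ \varphi_{ij}(\bar x)=0\}$ and $\mathcal{J}^-_{i,0}(\bar x)=\{j\in\{1,\dots,J_i\}:\psi_{ij}<0,\ \phi_{ij}(\bar x)=0\}$. *)

theory Defs
  imports "HOL-Analysis.Analysis"
begin

(* Row i of A is the vector A i (i = 1..I),
   inner product A i \<bullet> x. *)

definition pos_part :: "real \<Rightarrow> real" where "pos_part t = max t 0"
definition neg_part :: "real \<Rightarrow> real" where "neg_part t = max (- t) 0"

definition theta_MHS ::
  "(real^'n \<Rightarrow> real) \<Rightarrow> (nat \<Rightarrow> nat) \<Rightarrow> (nat \<Rightarrow> nat \<Rightarrow> real)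
   \<Rightarrow> (nat \<Rightarrow> nat \<Rightarrow> real^'n \<Rightarrow> real) \<Rightarrow> (nat \<Rightarrow> nat \<Rightarrow> real^'n \<Rightarrow> real) \<Rightarrow> real^'n \<Rightarrow> real"
  where "theta_MHS c J psi phi vphi x = c x +
     (\<Sum>j=1..J 0. psi 0 j * indicator {0..} (phi 0 j x) * indicator {0<..} (vphi 0 j x))"

definition X_MHS ::
  "(real^'n) set \<Rightarrow> nat \<Rightarrow> (nat \<Rightarrow> real^'n) \<Rightarrow> (nat \<Rightarrow> real) \<Rightarrow> (nat \<Rightarrow> nat) \<Rightarrow> (nat \<Rightarrow> nat \<Rightarrow> real)
   \<Rightarrow> (nat \<Rightarrow> nat \<Rightarrow> real^'n \<Rightarrow> real) \<Rightarrow> (nat \<Rightarrow> nat \<Rightarrow> real^'n \<Rightarrow> real) \<Rightarrow> (real^'n) set"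
  where "X_MHS P I A eta J psi phi vphi = {x \<in> P. \<forall>i\<in>{1..I}.
     A i \<bullet> x + (\<Sum>j=1..J i. psi i j * indicator {0..} (phi i j x) * indicator {0<..} (vphi i j x))
       \<ge> eta i}"

definition theta_MHS_eps ::
  "real \<Rightarrow> (real^'n \<Rightarrow> real) \<Rightarrow> (nat \<Rightarrow> nat) \<Rightarrow> (nat \<Rightarrow> nat \<Rightarrow> real)
   \<Rightarrow> (nat \<Rightarrow> nat \<Rightarrow> real^'n \<Rightarrow> real) \<Rightarrow> (nat \<Rightarrow> nat \<Rightarrow> real^'n \<Rightarrow> real) \<Rightarrow> real^'n \<Rightarrow> real"
  where "theta_MHS_eps \<epsilon> c J psi phi vphi x = c x
     + (\<Sum>j=1..J 0. pos_part (psi 0 j) * indicator {0..} (phi 0 j x) * indicator {\<epsilon>..} (vphi 0 j x))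
     - (\<Sum>j=1..J 0. neg_part (psi 0 j) * indicator {-\<epsilon><..} (phi 0 j x) * indicator {0<..} (vphi 0 j x))"

definition X_MHS_eps ::
  "real \<Rightarrow> (real^'n) set \<Rightarrow> nat \<Rightarrow> (nat \<Rightarrow> real^'n) \<Rightarrow> (nat \<Rightarrow> real) \<Rightarrow> (nat \<Rightarrow> nat) \<Rightarrow> (nat \<Rightarrow> nat \<Rightarrow> real)
   \<Rightarrow> (nat \<Rightarrow> nat \<Rightarrow> real^'n \<Rightarrow> real) \<Rightarrow> (nat \<Rightarrow> nat \<Rightarrow> real^'n \<Rightarrow> real) \<Rightarrow> (real^'n) set"
  where "X_MHS_eps \<epsilon> P I A eta J psi phi vphi = {x \<in> P. \<forall>i\<in>{1..I}.
     A i \<bullet> x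
     + (\<Sum>j=1..J i. pos_part (psi i j) * indicator {0..} (phi i j x) * indicator {\<epsilon>..} (vphi i j x))
     - (\<Sum>j=1..J i. neg_part (psi i j) * indicator {-\<epsilon><..} (phi i j x) * indicator {0<..} (vphi i j x))
       \<ge> eta i}"

definition local_maximizer :: "('a::topological_space \<Rightarrow> real) \<Rightarrow> 'a set \<Rightarrow> 'a \<Rightarrow> bool" where
  "local_maximizer f X xb \<longleftrightarrow> xb \<in> X \<and>
     (\<exists>N. open N \<and> xb \<in> N \<and> (\<forall>x\<in>X \<inter> N. f xb \<ge> f x))"

definition J_plus0 :: "(nat \<Rightarrow> nat) \<Rightarrow> (nat \<Rightarrow> nat \<Rightarrow> real) \<Rightarrow> (nat \<Rightarrow> nat \<Rightarrow> 'a \<Rightarrow> real) \<Rightarrow> nat \<Rightarrow> 'a \<Rightarrow> nat set"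
  where "J_plus0 J psi vphi i xb = {j \<in> {1..J i}. psi i j > 0 \<and> vphi i j xb = 0}"

definition J_minus0 :: "(nat \<Rightarrow> nat) \<Rightarrow> (nat \<Rightarrow> nat \<Rightarrow> real) \<Rightarrow> (nat \<Rightarrow> nat \<Rightarrow> 'a \<Rightarrow> real) \<Rightarrow> nat \<Rightarrow> 'a \<Rightarrow> nat set"
  where "J_minus0 J psi phi i xb = {j \<in> {1..J i}. psi i j < 0 \<and> phi i j xb = 0}"

definition local_sign_invariance ::
  "nat \<Rightarrow> (nat \<Rightarrow> nat) \<Rightarrow> (nat \<Rightarrow> nat \<Rightarrow> real) \<Rightarrow> (nat \<Rightarrow> nat \<Rightarrow> 'a::topological_space \<Rightarrow> real)
   \<Rightarrow> (nat \<Rightarrow> nat \<Rightarrow> 'a \<Rightarrow> real) \<Rightarrow> 'a \<Rightarrow> bool" where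
  "local_sign_invariance I J psi phi vphi xb \<longleftrightarrow> (\<forall>i\<in>{0..I}.
     (\<forall>j\<in>J_plus0 J psi vphi i xb. \<exists>N. open N \<and> xb \<in> N \<and> (\<forall>x\<in>N. vphi i j x \<le> 0)) \<and>
     (\<forall>j\<in>J_minus0 J psi phi i xb. \<exists>N. open N \<and> xb \<in> N \<and> (\<forall>x\<in>N. phi i j x \<ge> 0)))"

end

theory Submission
  imports Defs
begin

definition Tm :: "real \<Rightarrow> real \<Rightarrow> real \<Rightarrow> real" where
  "Tm p a b = p * indicator {0..} a * indicator {0<..} b"

definition Te :: "real \<Rightarrow> real \<Rightarrow> real \<Rightarrow> real \<Rightarrow> real" where
  "Te e p a b = pos_part p * indicator {0..} a * indicator {e..} b
     - neg_part p * indicator {-e<..} a * indicator {0<..} b"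

lemma theta_eq: "theta_MHS c J psi phi vphi x = c x + (\<Sum>j=1..J 0. Tm (psi 0 j) (phi 0 j x) (vphi 0 j x))"
  by (simp add: theta_MHS_def Tm_def)

lemma theta_eps_eq: "theta_MHS_eps e c J psi phi vphi x = c x + (\<Sum>j=1..J 0. Te e (psi 0 j) (phi 0 j x) (vphi 0 j x))"
  by (simp add: theta_MHS_eps_def Te_def sum_subtractf)

lemma X_eq: "X_MHS P I A eta J psi phi vphi = {x \<in> P. \<forall>i\<in>{1..I}.
     A i \<bullet> x + (\<Sum>j=1..J i. Tm (psi i j) (phi i j x) (vphi i j x)) \<ge> eta i}"
  by (simp add: X_MHS_def Tm_def)

lemma X_eps_eq: "X_MHS_eps e P I A eta J psi phi vphi = {x \<in> P. \<forall>i\<in>{1..I}.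
     A i \<bullet> x + (\<Sum>j=1..J i. Te e (psi i j) (phi i j x) (vphi i j x)) \<ge> eta i}"
  by (simp add: X_MHS_eps_def Te_def sum_subtractf algebra_simps)

lemma Te_le: "0 < e \<Longrightarrow> Te e p a b \<le> Tm p a b"
  by (auto simp: Te_def Tm_def pos_part_def neg_part_def split: split_indicator)

lemma single1: "\<exists>e>0. \<forall>\<epsilon>. 0 < \<epsilon> \<and> \<epsilon> \<le> e \<longrightarrow> Te \<epsilon> p a b = Tm p a b"
proof (cases "p > 0")
  case True
  show ?thesis
  proof (cases "b > 0")
    case True
    with \<open>p>0\<close> show ?thesis
      by (intro exI[of _ b]) (auto simp: Te_def Tm_def pos_part_def neg_part_def split: split_indicator)
  next
    case False
    with \<open>p>0\<close> show ?thesis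
      by (intro exI[of _ 1]) (auto simp: Te_def Tm_def pos_part_def neg_part_def split: split_indicator)
  qed
next
  case False
  show ?thesis
  proof (cases "a < 0")
    case True
    with False show ?thesis
      by (intro exI[of _ "-a"]) (auto simp: Te_def Tm_def pos_part_def neg_part_def split: split_indicator)
  next
    case F2: False
    with False show ?thesis
      by (intro exI[of _ 1]) (auto simp: Te_def Tm_def pos_part_def neg_part_def split: split_indicator)
  qed
qed

lemma single2:
  fixes f g :: "'a::topological_space \<Rightarrow> real"
  assumes cf: "continuous_on UNIV f" and cg: "continuous_on UNIV g"
    and h1: "p > 0 \<Longrightarrow> g xb = 0 \<Longrightarrow> \<exists>N. open N \<and> xb \<in> N \<and> (\<forall>x\<in>N. g x \<le> 0)"
    and h2: "p < 0 \<Longrightarrow> f xb = 0 \<Longrightarrow> \<exists>N. open N \<and> xb \<in> N \<and> (\<forall>x\<in>N. f x \<ge> 0)"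
  shows "\<exists>e>0. \<exists>N. open N \<and> xb \<in> N \<and> (\<forall>x\<in>N. \<forall>\<epsilon>. 0 < \<epsilon> \<and> \<epsilon> \<le> e \<longrightarrow>
            Te \<epsilon> p (f x) (g x) = Tm p (f x) (g x))"
proof -
  have cc: "continuous_on UNIV (\<lambda>x::'a. k::real)" for k by (rule continuous_on_const)
  consider "p > 0" "g xb > 0" | "p > 0" "g xb < 0" | "p > 0" "g xb = 0"
    | "p < 0" "f xb < 0" | "p < 0" "f xb > 0" | "p < 0" "f xb = 0" | "p = 0"
    by linarith
  then show ?thesis
  proof cases
    case 1
    have "open {x. g xb / 2 < g x}" by (rule open_Collect_less[OF cc cg])
    with 1 show ?thesis
      by (intro exI[of _ "g xb / 2"] conjI exI[of _ "{x. g xb / 2 < g x}"])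
        (auto simp: Te_def Tm_def pos_part_def neg_part_def split: split_indicator)
  next
    case 2
    have "open {x. g x < 0}" by (rule open_Collect_less[OF cg cc])
    with 2 show ?thesis
      by (intro exI[of _ 1] conjI exI[of _ "{x. g x < 0}"])
        (auto simp: Te_def Tm_def pos_part_def neg_part_def split: split_indicator)
  next
    case 3
    then obtain N where "open N" "xb \<in> N" "\<forall>x\<in>N. g x \<le> 0" using h1 by blast
    with 3 show ?thesis
      by (intro exI[of _ 1] conjI exI[of _ N])
        (auto simp: Te_def Tm_def pos_part_def neg_part_def split: split_indicator)
  next
    case 4
    have "open {x. f x < f xb / 2}" by (rule open_Collect_less[OF cf cc])
    with 4 show ?thesis
      by (intro exI[of _ "- f xb / 2"] conjI exI[of _ "{x. f x < f xb / 2}"])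
        (auto simp: Te_def Tm_def pos_part_def neg_part_def split: split_indicator)
  next
    case 5
    have "open {x. 0 < f x}" by (rule open_Collect_less[OF cc cf])
    with 5 show ?thesis
      by (intro exI[of _ 1] conjI exI[of _ "{x. 0 < f x}"])
        (auto simp: Te_def Tm_def pos_part_def neg_part_def split: split_indicator)
  next
    case 6
    then obtain N where "open N" "xb \<in> N" "\<forall>x\<in>N. f x \<ge> 0" using h2 by blast
    with 6 show ?thesis
      by (intro exI[of _ 1] conjI exI[of _ N])
        (auto simp: Te_def Tm_def pos_part_def neg_part_def split: split_indicator)
  next
    case 7
    then show ?thesis
      by (intro exI[of _ 1] conjI exI[of _ UNIV])
        (auto simp: Te_def Tm_def pos_part_def neg_part_def)
  qed
qed

lemma combine:
  fixes xb :: "'a::topological_space" and R :: "'k \<Rightarrow> 'a \<Rightarrow> real \<Rightarrow> bool"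
  assumes "finite S"
  shows "(\<forall>k\<in>S. \<exists>e>0. \<exists>N. open N \<and> xb \<in> N \<and> (\<forall>x\<in>N. \<forall>\<epsilon>. 0 < \<epsilon> \<and> \<epsilon> \<le> e \<longrightarrow> R k x \<epsilon>))
    \<Longrightarrow> \<exists>e>0. \<exists>N. open N \<and> xb \<in> N \<and> (\<forall>k\<in>S. \<forall>x\<in>N. \<forall>\<epsilon>. 0 < \<epsilon> \<and> \<epsilon> \<le> e \<longrightarrow> R k x \<epsilon>)"
  using assms
proof (induction S rule: finite_induct)
  case empty
  have "\<exists>N. open N \<and> xb \<in> N" by (rule exI[of _ UNIV]) simp
  then show ?case by (intro exI[of _ "1::real"]) auto
next
  case (insert k S)
  then obtain e N where e: "e > 0" "open N" "xb \<in> N"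
    "\<forall>k\<in>S. \<forall>x\<in>N. \<forall>\<epsilon>. 0 < \<epsilon> \<and> \<epsilon> \<le> e \<longrightarrow> R k x \<epsilon>" by auto
  from insert.prems obtain e' N' where e': "e' > 0" "open N'" "xb \<in> N'"
    "\<forall>x\<in>N'. \<forall>\<epsilon>. 0 < \<epsilon> \<and> \<epsilon> \<le> e' \<longrightarrow> R k x \<epsilon>" by auto
  show ?case
    apply (intro exI[of _ "min e e'"] conjI exI[of _ "N \<inter> N'"])
    using e e' by auto
qed

theorem proposition8:
  fixes P :: "(real^'n) set" and c :: "real^'n \<Rightarrow> real"
    and I :: nat and A :: "nat \<Rightarrow> real^'n" and eta :: "nat \<Rightarrow> real"
    and J :: "nat \<Rightarrow> nat" and psi :: "nat \<Rightarrow> nat \<Rightarrow> real"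
    and phi vphi :: "nat \<Rightarrow> nat \<Rightarrow> real^'n \<Rightarrow> real" and xb :: "real^'n"
  assumes "closed P" and "convex P"
    and "\<And>i j. i \<le> I \<Longrightarrow> j \<in> {1..J i} \<Longrightarrow> continuous_on UNIV (phi i j)"
    and "\<And>i j. i \<le> I \<Longrightarrow> j \<in> {1..J i} \<Longrightarrow> continuous_on UNIV (vphi i j)"
    and "xb \<in> P"
  shows "\<exists>\<epsilon>b>0. \<forall>\<epsilon>. 0 < \<epsilon> \<and> \<epsilon> \<le> \<epsilon>b \<longrightarrow>
     (local_maximizer (theta_MHS c J psi phi vphi) (X_MHS P I A eta J psi phi vphi) xb
        \<longrightarrow> local_maximizer (theta_MHS_eps \<epsilon> c J psi phi vphi) (X_MHS_eps \<epsilon> P I A eta J psi phi vphi) xb)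
   \<and> (local_sign_invariance I J psi phi vphi xb
        \<and> local_maximizer (theta_MHS_eps \<epsilon> c J psi phi vphi) (X_MHS_eps \<epsilon> P I A eta J psi phi vphi) xb
        \<longrightarrow> local_maximizer (theta_MHS c J psi phi vphi) (X_MHS P I A eta J psi phi vphi) xb)"
proof -
  define S where "S = Sigma {0..I} (\<lambda>i. {1..J i})"
  have fS: "finite S" unfolding S_def by auto
  define R1 where "R1 = (\<lambda>(k::nat\<times>nat) (x::real^'n) \<epsilon>.
      Te \<epsilon> (psi (fst k) (snd k)) (phi (fst k) (snd k) xb) (vphi (fst k) (snd k) xb)
    = Tm (psi (fst k) (snd k)) (phi (fst k) (snd k) xb) (vphi (fst k) (snd k) xb))"
  have "\<exists>e>0. \<exists>N. open N \<and> xb \<in> N \<and> (\<forall>k\<in>S. \<forall>x\<in>N. \<forall>\<epsilon>. 0 < \<epsilon> \<and> \<epsilon> \<le> e \<longrightarrow> R1 k x \<epsilon>)"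
  proof (rule combine[OF fS], intro ballI)
    fix k assume "k \<in> S"
    obtain e where "e > 0" "\<forall>\<epsilon>. 0 < \<epsilon> \<and> \<epsilon> \<le> e \<longrightarrow> R1 k xb \<epsilon>"
      using single1 unfolding R1_def by blast
    then show "\<exists>e>0. \<exists>N. open N \<and> xb \<in> N \<and> (\<forall>x\<in>N. \<forall>\<epsilon>. 0 < \<epsilon> \<and> \<epsilon> \<le> e \<longrightarrow> R1 k x \<epsilon>)"
      by (intro exI[of _ e] conjI exI[of _ UNIV]) (auto simp: R1_def)
  qed
  then obtain e1 N1 where e1N: "e1 > 0" "xb \<in> N1"
    "\<forall>k\<in>S. \<forall>x\<in>N1. \<forall>\<epsilon>. 0 < \<epsilon> \<and> \<epsilon> \<le> e1 \<longrightarrow> R1 k x \<epsilon>" by blast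
  have e1: "e1 > 0" "\<And>i j \<epsilon>. i \<le> I \<Longrightarrow> j \<in> {1..J i} \<Longrightarrow> 0 < \<epsilon> \<Longrightarrow> \<epsilon> \<le> e1 \<Longrightarrow>
      Te \<epsilon> (psi i j) (phi i j xb) (vphi i j xb) = Tm (psi i j) (phi i j xb) (vphi i j xb)"
  proof -
    show "e1 > 0" by fact
    fix i j \<epsilon> assume "i \<le> I" "j \<in> {1..J i}" "0 < \<epsilon>" "\<epsilon> \<le> e1"
    then have "(i, j) \<in> S" unfolding S_def by auto
    with e1N(2,3) \<open>0 < \<epsilon>\<close> \<open>\<epsilon> \<le> e1\<close> have "R1 (i, j) xb \<epsilon>" by blast
    then show "Te \<epsilon> (psi i j) (phi i j xb) (vphi i j xb) = Tm (psi i j) (phi i j xb) (vphi i j xb)"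
      unfolding R1_def by simp
  qed
  define R2 where "R2 = (\<lambda>(k::nat\<times>nat) (x::real^'n) \<epsilon>.
      Te \<epsilon> (psi (fst k) (snd k)) (phi (fst k) (snd k) x) (vphi (fst k) (snd k) x)
    = Tm (psi (fst k) (snd k)) (phi (fst k) (snd k) x) (vphi (fst k) (snd k) x))"
  have e2ex: "\<exists>e>0. \<exists>N. open N \<and> xb \<in> N \<and> (\<forall>k\<in>S. \<forall>x\<in>N. \<forall>\<epsilon>. 0 < \<epsilon> \<and> \<epsilon> \<le> e \<longrightarrow> R2 k x \<epsilon>)"
    if LS: "local_sign_invariance I J psi phi vphi xb"
  proof (rule combine[OF fS], intro ballI)
    fix k assume k: "k \<in> S"
    obtain i j where ij: "k = (i, j)" "i \<le> I" "j \<in> {1..J i}" using k unfolding S_def by auto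
    have "\<exists>e>0. \<exists>N. open N \<and> xb \<in> N \<and> (\<forall>x\<in>N. \<forall>\<epsilon>. 0 < \<epsilon> \<and> \<epsilon> \<le> e \<longrightarrow>
            Te \<epsilon> (psi i j) (phi i j x) (vphi i j x) = Tm (psi i j) (phi i j x) (vphi i j x))"
    proof (rule single2)
      show "continuous_on UNIV (phi i j)" using assms(3) ij by blast
      show "continuous_on UNIV (vphi i j)" using assms(4) ij by blast
      show "\<exists>N. open N \<and> xb \<in> N \<and> (\<forall>x\<in>N. vphi i j x \<le> 0)" if "psi i j > 0" "vphi i j xb = 0"
        using LS that ij unfolding local_sign_invariance_def J_plus0_def by auto
      show "\<exists>N. open N \<and> xb \<in> N \<and> (\<forall>x\<in>N. phi i j x \<ge> 0)" if "psi i j < 0" "phi i j xb = 0"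
        using LS that ij unfolding local_sign_invariance_def J_minus0_def by auto
    qed
    then show "\<exists>e>0. \<exists>N. open N \<and> xb \<in> N \<and> (\<forall>x\<in>N. \<forall>\<epsilon>. 0 < \<epsilon> \<and> \<epsilon> \<le> e \<longrightarrow> R2 k x \<epsilon>)"
      unfolding R2_def ij by simp
  qed
  define e2 where "e2 = (if local_sign_invariance I J psi phi vphi xb then SOME e. e>0 \<and> (\<exists>N. open N \<and> xb \<in> N \<and> (\<forall>k\<in>S. \<forall>x\<in>N. \<forall>\<epsilon>. 0 < \<epsilon> \<and> \<epsilon> \<le> e \<longrightarrow> R2 k x \<epsilon>)) else 1)"
  have e2: "e2 > 0" "local_sign_invariance I J psi phi vphi xb \<Longrightarrow>
     \<exists>N. open N \<and> xb \<in> N \<and> (\<forall>k\<in>S. \<forall>x\<in>N. \<forall>\<epsilon>. 0 < \<epsilon> \<and> \<epsilon> \<le> e2 \<longrightarrow> R2 k x \<epsilon>)"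
  proof -
    show "e2 > 0"
    proof (cases "local_sign_invariance I J psi phi vphi xb")
      case True
      from someI_ex[OF e2ex[OF True]] show ?thesis unfolding e2_def using True by simp
    qed (simp add: e2_def)
    assume True: "local_sign_invariance I J psi phi vphi xb"
    from someI_ex[OF e2ex[OF True]]
    show "\<exists>N. open N \<and> xb \<in> N \<and> (\<forall>k\<in>S. \<forall>x\<in>N. \<forall>\<epsilon>. 0 < \<epsilon> \<and> \<epsilon> \<le> e2 \<longrightarrow> R2 k x \<epsilon>)"
      unfolding e2_def using True by simp
  qed
  show ?thesis
  proof (intro exI[of _ "min e1 e2"] conjI allI impI)
    show "0 < min e1 e2" using e1 e2 by simp
  next
    fix \<epsilon> :: real assume eps: "0 < \<epsilon> \<and> \<epsilon> \<le> min e1 e2"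
    have agx: "(\<Sum>j=1..J i. Te \<epsilon> (psi i j) (phi i j xb) (vphi i j xb))
             = (\<Sum>j=1..J i. Tm (psi i j) (phi i j xb) (vphi i j xb))" if "i \<le> I" for i
      using e1(2)[OF that] eps by (intro sum.cong) auto
    have le: "(\<Sum>j=1..J i. Te \<epsilon> (psi i j) (phi i j x) (vphi i j x))
             \<le> (\<Sum>j=1..J i. Tm (psi i j) (phi i j x) (vphi i j x))" for i x
      using Te_le eps by (intro sum_mono) auto
    {
      assume LM: "local_maximizer (theta_MHS c J psi phi vphi) (X_MHS P I A eta J psi phi vphi) xb"
      then obtain N where N: "xb \<in> X_MHS P I A eta J psi phi vphi" "open N" "xb \<in> N"
        "\<forall>x\<in>X_MHS P I A eta J psi phi vphi \<inter> N. theta_MHS c J psi phi vphi xb \<ge> theta_MHS c J psi phi vphi x"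
        unfolding local_maximizer_def by blast
      have th0: "theta_MHS_eps \<epsilon> c J psi phi vphi xb = theta_MHS c J psi phi vphi xb"
        unfolding theta_eq theta_eps_eq using agx[of 0] by simp
      have sub: "X_MHS_eps \<epsilon> P I A eta J psi phi vphi \<subseteq> X_MHS P I A eta J psi phi vphi"
      proof
        fix x assume x: "x \<in> X_MHS_eps \<epsilon> P I A eta J psi phi vphi"
        hence xP: "x \<in> P" and xi: "\<And>i. i \<in> {1..I} \<Longrightarrow>
          eta i \<le> A i \<bullet> x + (\<Sum>j=1..J i. Te \<epsilon> (psi i j) (phi i j x) (vphi i j x))"
          unfolding X_eps_eq by auto
        have "eta i \<le> A i \<bullet> x + (\<Sum>j=1..J i. Tm (psi i j) (phi i j x) (vphi i j x))"
          if "i \<in> {1..I}" for i using xi[OF that] le[of i x] by linarith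
        then show "x \<in> X_MHS P I A eta J psi phi vphi" unfolding X_eq using xP by auto
      qed
      have xbin: "xb \<in> X_MHS_eps \<epsilon> P I A eta J psi phi vphi"
        using N(1) agx unfolding X_eq X_eps_eq by auto
      have "theta_MHS_eps \<epsilon> c J psi phi vphi xb \<ge> theta_MHS_eps \<epsilon> c J psi phi vphi x"
        if "x \<in> X_MHS_eps \<epsilon> P I A eta J psi phi vphi \<inter> N" for x
      proof -
        have "theta_MHS_eps \<epsilon> c J psi phi vphi x \<le> theta_MHS c J psi phi vphi x"
          unfolding theta_eq theta_eps_eq using le[of 0 x] by simp
        also have "\<dots> \<le> theta_MHS c J psi phi vphi xb" using N(4) that sub by blast
        finally show ?thesis using th0 by simp
      qed
      then show "local_maximizer (theta_MHS_eps \<epsilon> c J psi phi vphi) (X_MHS_eps \<epsilon> P I A eta J psi phi vphi) xb"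
        unfolding local_maximizer_def using xbin N(2,3) by blast
    }
    {
      assume H: "local_sign_invariance I J psi phi vphi xb \<and>
        local_maximizer (theta_MHS_eps \<epsilon> c J psi phi vphi) (X_MHS_eps \<epsilon> P I A eta J psi phi vphi) xb"
      obtain N2 where N2: "open N2" "xb \<in> N2" "\<forall>k\<in>S. \<forall>x\<in>N2. \<forall>\<epsilon>. 0 < \<epsilon> \<and> \<epsilon> \<le> e2 \<longrightarrow> R2 k x \<epsilon>"
        using e2(2) H by blast
      have ag: "(\<Sum>j=1..J i. Te \<epsilon> (psi i j) (phi i j x) (vphi i j x))
             = (\<Sum>j=1..J i. Tm (psi i j) (phi i j x) (vphi i j x))" if "i \<le> I" "x \<in> N2" for i x
      proof (intro sum.cong refl)
        fix j assume "j \<in> {1..J i}"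
        then have "(i, j) \<in> S" using that unfolding S_def by auto
        then show "Te \<epsilon> (psi i j) (phi i j x) (vphi i j x) = Tm (psi i j) (phi i j x) (vphi i j x)"
          using N2(3) that eps unfolding R2_def by fastforce
      qed
      obtain N where N: "xb \<in> X_MHS_eps \<epsilon> P I A eta J psi phi vphi" "open N" "xb \<in> N"
        "\<forall>x\<in>X_MHS_eps \<epsilon> P I A eta J psi phi vphi \<inter> N. theta_MHS_eps \<epsilon> c J psi phi vphi xb \<ge> theta_MHS_eps \<epsilon> c J psi phi vphi x"
        using H unfolding local_maximizer_def by blast
      have Xeq: "X_MHS_eps \<epsilon> P I A eta J psi phi vphi \<inter> N2 = X_MHS P I A eta J psi phi vphi \<inter> N2"
        unfolding X_eq X_eps_eq using ag by auto
      have theq: "theta_MHS_eps \<epsilon> c J psi phi vphi x = theta_MHS c J psi phi vphi x" if "x \<in> N2" for x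
        unfolding theta_eq theta_eps_eq using ag[of 0 x] that by simp
      have xbin: "xb \<in> X_MHS P I A eta J psi phi vphi" using Xeq N(1) N2(2) by blast
      have "theta_MHS c J psi phi vphi xb \<ge> theta_MHS c J psi phi vphi x"
        if "x \<in> X_MHS P I A eta J psi phi vphi \<inter> (N \<inter> N2)" for x
      proof -
        have "x \<in> X_MHS_eps \<epsilon> P I A eta J psi phi vphi \<inter> N" using Xeq that by blast
        then have "theta_MHS_eps \<epsilon> c J psi phi vphi xb \<ge> theta_MHS_eps \<epsilon> c J psi phi vphi x"
          using N(4) by blast
        then show ?thesis using theq[of x] theq[of xb] N2(2) that by simp
      qed
      then show "local_maximizer (theta_MHS c J psi phi vphi) (X_MHS P I A eta J psi phi vphi) xb"
        unfolding local_maximizer_def using xbin N(2,3) N2(1,2)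
        by (intro conjI exI[of _ "N \<inter> N2"]) auto
    }
  qed
qed

end
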